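(* Let $M$ be a complex manifold and $z\in M$. If $M$ is hyperbolic at $z$, then there is a neighborhood $W$ of $z$ such that $M$ is hyperbolic at every $z'\in W$.
   Context: $\mathbb D\subset\mathbb C$ is the open unit disc. For $z,w\in M$: $\tilde k^\ast_M(z,w)=\inf\{|\alpha|:\exists f\in\mathcal O(\mathbb D,M),\ f(0)=z,\ f(\alpha)=w\}$, $\tilde k_M=\tanh^{-1}\tilde k^\ast_M$; the Kobayashi pseudodistance is $k_M(z,w)=\inf_{m\in\mathbb N}\inf\{\sum_{j=1}^m\tilde k_M(z_{j-1},z_j): z_0,\dots,z_m\in M,\ z_0=z,\ z_m=w\}$. $M$ is hyperbolic at $z$ if $k_M(z,w)>0$ for every $w\in M\setminus\{z\}$. *)

theory Defs
  imports "HOL-Analysis.Analysis"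
begin

definition holo_vec_on :: "(complex ^ 'n) set \<Rightarrow> (complex ^ 'n \<Rightarrow> complex ^ 'm) \<Rightarrow> bool" where
  "holo_vec_on S g \<longleftrightarrow> open S \<and> (\<forall>x\<in>S. \<exists>D. (g has_derivative D) (at x) \<and>
       (\<forall>(c::complex) v. D (c *s v) = c *s D v))"

text \<open>A holomorphic atlas of complex dimension CARD('n) on the topological space
  (the whole type) 'a: charts are homeomorphisms of open sets onto open subsets of C^n,
  the chart domains cover, and all transition maps are holomorphic.\<close>
definition complex_atlas :: "('a::topological_space set \<times> ('a \<Rightarrow> complex ^ 'n)) set \<Rightarrow> bool" where
  "complex_atlas A \<longleftrightarrow>
     (\<forall>(U,\<phi>)\<in>A. open U \<and> open (\<phi> ` U) \<and> (\<exists>\<psi>. homeomorphism U (\<phi> ` U) \<phi> \<psi>)) \<and>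
     \<Union> (fst ` A) = UNIV \<and>
     (\<forall>(U,\<phi>)\<in>A. \<forall>(V,\<psi>)\<in>A. holo_vec_on (\<phi> ` (U \<inter> V)) (\<psi> \<circ> inv_into U \<phi>))"

definition holo_disc :: "('a::topological_space set \<times> ('a \<Rightarrow> complex ^ 'n)) set \<Rightarrow> (complex \<Rightarrow> 'a) \<Rightarrow> bool" where
  "holo_disc A f \<longleftrightarrow> continuous_on (ball 0 1) f \<and>
     (\<forall>(U,\<phi>)\<in>A. \<forall>i. (\<lambda>t. \<phi> (f t) $ i) holomorphic_on (ball 0 1 \<inter> f -` U))"

text \<open>Lempert-type function k~*_M; inf of the empty set is +infinity.\<close>
definition kstar :: "('a::topological_space set \<times> ('a \<Rightarrow> complex ^ 'n)) set \<Rightarrow> 'a \<Rightarrow> 'a \<Rightarrow> ereal" where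
  "kstar A z w = Inf {ereal (cmod \<alpha>) | \<alpha> f. \<alpha> \<in> ball 0 1 \<and> holo_disc A f \<and> f 0 = z \<and> f \<alpha> = w}"

definition ktilde :: "('a::topological_space set \<times> ('a \<Rightarrow> complex ^ 'n)) set \<Rightarrow> 'a \<Rightarrow> 'a \<Rightarrow> ereal" where
  "ktilde A z w = (if kstar A z w < 1 then ereal (artanh (real_of_ereal (kstar A z w))) else \<infinity>)"

definition kobayashi :: "('a::topological_space set \<times> ('a \<Rightarrow> complex ^ 'n)) set \<Rightarrow> 'a \<Rightarrow> 'a \<Rightarrow> ereal" where
  "kobayashi A z w = Inf {(\<Sum>j\<in>{1..m}. ktilde A (zs (j - 1)) (zs j)) | (m::nat) (zs::nat \<Rightarrow> 'a).
       zs 0 = z \<and> zs m = w}"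

definition hyperbolic_at :: "('a::topological_space set \<times> ('a \<Rightarrow> complex ^ 'n)) set \<Rightarrow> 'a \<Rightarrow> bool" where
  "hyperbolic_at A z \<longleftrightarrow> (\<forall>w. w \<noteq> z \<longrightarrow> kobayashi A z w > 0)"

end

theory Submission
  imports Defs
begin


lemma artanh_mono_real:
  fixes x y :: real assumes "0 \<le> x" "x \<le> y" "y < 1"
  shows "artanh x \<le> artanh y"
proof -
  have "(1+x)/(1-x) \<le> (1+y)/(1-y)" using assms by (simp add: divide_simps) (simp add: algebra_simps)
  moreover have "0 < (1+x)/(1-x)" using assms by simp
  ultimately show ?thesis unfolding artanh_def by simp
qed

lemma artanh_nonneg_real: fixes x :: real assumes "0 \<le> x" "x < 1" shows "0 \<le> artanh x"
  using artanh_mono_real[of 0 x] assms by simp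

lemma artanh_le_2x:
  fixes x :: real assumes "0 \<le> x" "x \<le> 1/2"
  shows "artanh x \<le> 2 * x"
proof -
  have pos: "0 < (1+x)/(1-x)" using assms by simp
  have "ln ((1+x)/(1-x)) \<le> (1+x)/(1-x) - 1" using ln_le_minus_one[OF pos] .
  also have "\<dots> = 2*x/(1-x)" using assms by (simp add: field_simps)
  also have "\<dots> \<le> 4*x" using assms by (simp add: divide_simps) (simp add: algebra_simps mult_left_le)
  finally show ?thesis unfolding artanh_def by simp
qed

lemma artanh_ge_half:
  fixes x :: real assumes "0 \<le> x" "x < 1"
  shows "x / 2 \<le> artanh x"
proof -
  have pos: "0 < (1-x)/(1+x)" using assms by simp
  have "ln ((1-x)/(1+x)) \<le> (1-x)/(1+x) - 1" using ln_le_minus_one[OF pos] .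
  moreover have "ln ((1-x)/(1+x)) = - ln ((1+x)/(1-x))" using assms
    by (simp add: ln_div)
  moreover have "(1-x)/(1+x) - 1 = - 2*x/(1+x)" using assms by (simp add: field_simps)
  moreover have "2*x/(1+x) \<ge> x" using assms by (simp add: divide_simps) (simp add: algebra_simps mult_left_le)
  ultimately show ?thesis unfolding artanh_def by simp
qed



lemma kstar_nonneg: "0 \<le> kstar A x y"
  unfolding kstar_def by (rule Inf_greatest) auto

lemma ktilde_nonneg: "0 \<le> ktilde A x y"
proof (cases "kstar A x y < 1")
  case True
  have k0: "0 \<le> kstar A x y" by (rule kstar_nonneg)
  then obtain r where r: "kstar A x y = ereal r" using True
    by (cases "kstar A x y") auto
  with k0 True have "0 \<le> r" "r < 1" by auto
  then show ?thesis using True r by (simp add: ktilde_def artanh_nonneg_real)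
qed (simp add: ktilde_def)

lemma kob_le_chain:
  fixes m :: nat
  assumes "zs 0 = x" "zs m = y"
  shows "kobayashi A x y \<le> (\<Sum>j\<in>{1..m}. ktilde A (zs (j - 1)) (zs j))"
  unfolding kobayashi_def
  by (rule Inf_lower, rule CollectI, rule exI[of _ m], rule exI[of _ zs]) (use assms in simp)

lemma kob_nonneg: "0 \<le> kobayashi A x y"
  unfolding kobayashi_def by (rule Inf_greatest) (auto intro!: sum_nonneg ktilde_nonneg)

lemma kob_self: "kobayashi A x x \<le> 0"
  using kob_le_chain[of "\<lambda>_. x" x 0 x A] by simp

lemma disc_step:
  assumes "holo_disc A f" "\<alpha> \<in> ball 0 1" "f 0 = x" "f \<alpha> = y"
  shows "ktilde A x y \<le> ereal (artanh (cmod \<alpha>))"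
proof -
  have a1: "cmod \<alpha> < 1" using assms(2) by simp
  have "kstar A x y \<le> ereal (cmod \<alpha>)"
    unfolding kstar_def by (rule Inf_lower) (use assms in blast)
  moreover have k0: "0 \<le> kstar A x y" by (rule kstar_nonneg)
  ultimately obtain r where r: "kstar A x y = ereal r" "0 \<le> r" "r \<le> cmod \<alpha>"
    by (cases "kstar A x y") auto
  then show ?thesis using a1
    by (simp add: ktilde_def artanh_mono_real)
qed

lemma kob_le_ktilde: "kobayashi A x y \<le> ktilde A x y"
  using kob_le_chain[of "\<lambda>j. if j = 0 then x else y" x 1 y A] by simp

lemma kob_le_disc_chain:
  fixes m :: nat
  assumes "\<And>j. j \<in> {1..m} \<Longrightarrow> \<alpha> j \<in> ball 0 1 \<and> holo_disc A (f j) \<and> f j 0 = xs (j - 1) \<and> f j (\<alpha> j) = xs j"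
  shows "kobayashi A (xs 0) (xs m) \<le> ereal (\<Sum>j\<in>{1..m}. artanh (cmod (\<alpha> j)))"
proof -
  have "kobayashi A (xs 0) (xs m) \<le> (\<Sum>j\<in>{1..m}. ktilde A (xs (j - 1)) (xs j))"
    by (rule kob_le_chain) auto
  also have "\<dots> \<le> (\<Sum>j\<in>{1..m}. ereal (artanh (cmod (\<alpha> j))))"
    by (rule sum_mono) (use assms disc_step in blast)
  finally show ?thesis by simp
qed

lemma kob_step:
  assumes "kobayashi A x w < ereal a" "ktilde A w y \<le> ereal b"
  shows "kobayashi A x y < ereal (a + b)"
proof -
  from assms(1) obtain c where "c \<in> {(\<Sum>j\<in>{1..m}. ktilde A (zs (j - 1)) (zs j)) | (m::nat) zs.
       zs 0 = x \<and> zs m = w}" "c < ereal a"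
    unfolding kobayashi_def by (auto simp: Inf_less_iff)
  then obtain m :: nat and zs where c: "c = (\<Sum>j\<in>{1..m}. ktilde A (zs (j - 1)) (zs j))" "zs 0 = x" "zs m = w"
    by blast
  define zs' where "zs' = zs(Suc m := y)"
  have "kobayashi A x y \<le> (\<Sum>j\<in>{1..Suc m}. ktilde A (zs' (j - 1)) (zs' j))"
    by (rule kob_le_chain) (auto simp: zs'_def c)
  also have "\<dots> = (\<Sum>j\<in>{1..m}. ktilde A (zs' (j - 1)) (zs' j)) + ktilde A (zs' m) (zs' (Suc m))"
    by (simp add: sum.atLeast1_atMost_eq)
  also have "(\<Sum>j\<in>{1..m}. ktilde A (zs' (j - 1)) (zs' j)) = c"
    unfolding c zs'_def by (rule sum.cong) auto
  also have "ktilde A (zs' m) (zs' (Suc m)) = ktilde A w y" using c by (simp add: zs'_def)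
  finally have le: "kobayashi A x y \<le> c + ktilde A w y" .
  have c0: "0 \<le> c" unfolding c by (auto intro!: sum_nonneg ktilde_nonneg)
  have t0: "0 \<le> ktilde A w y" by (rule ktilde_nonneg)
  obtain c' where c': "c = ereal c'" using c0 \<open>c < ereal a\<close> by (cases c) auto
  obtain t' where t': "ktilde A w y = ereal t'" using t0 assms(2) by (cases "ktilde A w y") auto
  have "c + ktilde A w y < ereal (a + b)"
    using c' t' \<open>c < ereal a\<close> assms(2) by simp
  with le show ?thesis by simp
qed



lemma disc_exists:
  assumes "ktilde A x y < ereal e"
  shows "\<exists>\<alpha> f. \<alpha> \<in> ball 0 1 \<and> holo_disc A f \<and> f 0 = x \<and> f \<alpha> = y \<and> artanh (cmod \<alpha>) < e"
proof -
  have kl: "kstar A x y < 1" using assms by (auto simp: ktilde_def split: if_splits)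
  have k0: "0 \<le> kstar A x y" by (rule kstar_nonneg)
  obtain k where k: "kstar A x y = ereal k" using kl k0 by (cases "kstar A x y") auto
  have k01: "0 \<le> k" "k < 1" using k kl k0 by auto
  have ak: "artanh k < e" using assms kl k by (simp add: ktilde_def)
  define e' where "e' = (artanh k + e) / 2"
  have e'1: "artanh k < e'" "e' < e" using ak by (auto simp: e'_def)
  have "k < tanh e'"
  proof (rule ccontr)
    assume "\<not> k < tanh e'"
    then have "tanh e' \<le> k" by simp
    moreover have "0 \<le> tanh e'" using e'1 artanh_nonneg_real[OF k01] by simp
    ultimately have "artanh (tanh e') \<le> artanh k" using artanh_mono_real k01 by blast
    then show False using e'1 by (simp add: artanh_tanh_real)
  qed
  then have "kstar A x y < ereal (tanh e')" using k by simp
  then obtain u where u: "u \<in> {ereal (cmod \<alpha>) | \<alpha> f. \<alpha> \<in> ball 0 1 \<and> holo_disc A f \<and> f 0 = x \<and> f \<alpha> = y}"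
    "u < ereal (tanh e')"
    unfolding kstar_def by (auto simp: Inf_less_iff)
  then obtain \<alpha> f where af: "u = ereal (cmod \<alpha>)" "\<alpha> \<in> ball 0 1" "holo_disc A f" "f 0 = x" "f \<alpha> = y"
    by blast
  have "cmod \<alpha> < tanh e'" using u af by simp
  then have "artanh (cmod \<alpha>) \<le> artanh (tanh e')"
    by (intro artanh_mono_real) (auto simp: tanh_real_lt_1)
  then have "artanh (cmod \<alpha>) < e" using e'1 by (simp add: artanh_tanh_real)
  then show ?thesis using af by blast
qed

lemma kob_lower:
  fixes c :: real
  assumes c: "0 < c"
  and H: "\<And>(m::nat) xs f \<alpha>. xs 0 = x \<Longrightarrow> xs m = y \<Longrightarrow>
     (\<forall>j\<in>{1..m}. \<alpha> j \<in> ball 0 1 \<and> holo_disc A (f j) \<and> f j 0 = xs (j - 1) \<and> f j (\<alpha> j) = xs j) \<Longrightarrow>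
     (\<Sum>j\<in>{1..m}. artanh (cmod (\<alpha> j))) < c \<Longrightarrow> False"
  shows "ereal c \<le> kobayashi A x y"
  unfolding kobayashi_def
proof (rule Inf_greatest)
  fix u assume "u \<in> {(\<Sum>j\<in>{1..m}. ktilde A (zs (j - 1)) (zs j)) | (m::nat) (zs::nat \<Rightarrow> 'a).
       zs 0 = x \<and> zs m = y}"
  then obtain m :: nat and zs where u: "u = (\<Sum>j\<in>{1..m}. ktilde A (zs (j - 1)) (zs j))" "zs 0 = x" "zs m = y"
    by blast
  show "ereal c \<le> u"
  proof (rule ccontr)
    assume "\<not> ereal c \<le> u"
    then have ul: "u < ereal c" by simp
    define r where "r j = real_of_ereal (ktilde A (zs (j - 1)) (zs j))" for j
    have fin: "ktilde A (zs (j - 1)) (zs j) = ereal (r j)" if "j \<in> {1..m}" for j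
    proof -
      have "ktilde A (zs (j - 1)) (zs j) \<noteq> \<infinity>"
      proof
        assume "ktilde A (zs (j - 1)) (zs j) = \<infinity>"
        then have "u = \<infinity>" unfolding u(1) using that by (subst sum_Pinfty) auto
        then show False using ul by simp
      qed
      moreover have "0 \<le> ktilde A (zs (j - 1)) (zs j)" by (rule ktilde_nonneg)
      ultimately show ?thesis unfolding r_def by (cases "ktilde A (zs (j - 1)) (zs j)") auto
    qed
    have "u = (\<Sum>j\<in>{1..m}. ereal (r j))" unfolding u(1) by (rule sum.cong) (use fin in blast)+
    then have ur: "u = ereal (\<Sum>j\<in>{1..m}. r j)" by simp
    define \<eta> where "\<eta> = (c - (\<Sum>j\<in>{1..m}. r j)) / (real m + 1)"
    have \<eta>0: "0 < \<eta>" using ul ur by (simp add: \<eta>_def)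
    have "\<forall>j\<in>{1..m}. \<exists>\<alpha> f. \<alpha> \<in> ball 0 1 \<and> holo_disc A f \<and> f 0 = zs (j - 1) \<and> f \<alpha> = zs j
        \<and> artanh (cmod \<alpha>) < r j + \<eta>"
    proof
      fix j assume j: "j \<in> {1..m}"
      have "ktilde A (zs (j - 1)) (zs j) < ereal (r j + \<eta>)" using fin[OF j] \<eta>0 by simp
      then show "\<exists>\<alpha> f. \<alpha> \<in> ball 0 1 \<and> holo_disc A f \<and> f 0 = zs (j - 1) \<and> f \<alpha> = zs j
        \<and> artanh (cmod \<alpha>) < r j + \<eta>" by (rule disc_exists)
    qed
    then obtain \<alpha> f where af: "\<forall>j\<in>{1..m}. \<alpha> j \<in> ball 0 1 \<and> holo_disc A (f j) \<and> f j 0 = zs (j - 1)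
        \<and> f j (\<alpha> j) = zs j \<and> artanh (cmod (\<alpha> j)) < r j + \<eta>"
      by metis
    have "(\<Sum>j\<in>{1..m}. artanh (cmod (\<alpha> j))) \<le> (\<Sum>j\<in>{1..m}. r j + \<eta>)"
      by (rule sum_mono) (use af in fastforce)
    also have "\<dots> = (\<Sum>j\<in>{1..m}. r j) + real m * \<eta>" by (simp add: sum.distrib)
    also have "\<dots> < c"
    proof -
      have "real m * \<eta> < (real m + 1) * \<eta>" using \<eta>0 by simp
      also have "\<dots> = c - (\<Sum>j\<in>{1..m}. r j)" unfolding \<eta>_def by simp
      finally show ?thesis by simp
    qed
    finally show False using H[of zs m \<alpha> f] u af by auto
  qed
qed



lemma vec_field_deriv:
  fixes G :: "complex \<Rightarrow> complex^'n"
  assumes "\<And>i. ((\<lambda>t. G t $ i) has_field_derivative g' i) (at t)"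
  shows "(G has_derivative (\<lambda>s. s *s (\<chi> i. g' i))) (at t)"
proof -
  have "\<forall>b\<in>Basis. ((\<lambda>x. G x \<bullet> b) has_derivative (\<lambda>x. (x *s (\<chi> i. g' i)) \<bullet> b)) (at t)"
  proof
    fix b :: "complex^'n" assume "b \<in> Basis"
    then obtain i u where b: "b = axis i u" "u \<in> Basis" by (auto simp: Basis_vec_def)
    have "((\<lambda>x. G x $ i \<bullet> u) has_derivative (\<lambda>x. (x * g' i) \<bullet> u)) (at t)"
      using bounded_linear.has_derivative[OF bounded_linear_inner_left assms[of i, unfolded has_field_derivative_def]]
      by (simp add: mult.commute)
    then show "((\<lambda>x. G x \<bullet> b) has_derivative (\<lambda>x. (x *s (\<chi> i. g' i)) \<bullet> b)) (at t)"
      by (simp add: b inner_axis)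
  qed
  then show ?thesis by (subst has_derivative_componentwise_within) 
qed

lemma vec_holo_deriv:
  fixes G :: "complex \<Rightarrow> complex^'n"
  assumes "open T" "t \<in> T" "\<And>i. (\<lambda>t. G t $ i) holomorphic_on T"
  shows "\<exists>v. (G has_derivative (\<lambda>s. s *s v)) (at t)"
proof -
  have "\<forall>i. \<exists>d. ((\<lambda>t. G t $ i) has_field_derivative d) (at t)"
    using assms holomorphic_on_imp_differentiable_at field_differentiable_def by blast
  then obtain g' where "\<And>i. ((\<lambda>t. G t $ i) has_field_derivative g' i) (at t)" by metis
  then show ?thesis using vec_field_deriv by blast
qed

lemma vec_holo_cont:
  fixes G :: "complex \<Rightarrow> complex^'n"
  assumes "open T" "\<And>i. (\<lambda>t. G t $ i) holomorphic_on T"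
  shows "continuous_on T G"
proof (rule continuous_at_imp_continuous_on, rule ballI)
  fix t assume "t \<in> T"
  then obtain v where "(G has_derivative (\<lambda>s. s *s v)) (at t)" using vec_holo_deriv assms by blast
  then show "isCont G t" using has_derivative_continuous by blast
qed

lemma chart_facts:
  assumes atlas: "complex_atlas A" and UA: "(U,\<phi>) \<in> A"
  shows "open U" "open (\<phi> ` U)" "inj_on \<phi> U" "continuous_on U \<phi>"
    "continuous_on (\<phi> ` U) (inv_into U \<phi>)"
    "\<And>x. x \<in> U \<Longrightarrow> inv_into U \<phi> (\<phi> x) = x"
    "\<And>q. q \<in> \<phi> ` U \<Longrightarrow> inv_into U \<phi> q \<in> U \<and> \<phi> (inv_into U \<phi> q) = q"
proof -
  from atlas UA have o: "open U" "open (\<phi> ` U)" and "\<exists>\<psi>. homeomorphism U (\<phi> ` U) \<phi> \<psi>"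
    unfolding complex_atlas_def by auto
  then obtain \<psi> where h: "homeomorphism U (\<phi> ` U) \<phi> \<psi>" by blast
  have inv: "\<And>x. x \<in> U \<Longrightarrow> \<psi> (\<phi> x) = x" using h by (simp add: homeomorphism_def)
  show inj: "inj_on \<phi> U" by (metis inj_onI inv)
  show "open U" "open (\<phi> ` U)" by fact+
  show "continuous_on U \<phi>" using h by (simp add: homeomorphism_def)
  show li: "\<And>x. x \<in> U \<Longrightarrow> inv_into U \<phi> (\<phi> x) = x" using inj by simp
  have eq: "\<And>q. q \<in> \<phi> ` U \<Longrightarrow> inv_into U \<phi> q = \<psi> q" using inv li by auto
  have "continuous_on (\<phi> ` U) \<psi>" using h by (simp add: homeomorphism_def)
  then show "continuous_on (\<phi> ` U) (inv_into U \<phi>)" using continuous_on_cong eq by force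
  show "\<And>q. q \<in> \<phi> ` U \<Longrightarrow> inv_into U \<phi> q \<in> U \<and> \<phi> (inv_into U \<phi> q) = q"
    by (auto simp: inv_into_into f_inv_into_f)
qed

lemma chart_compose_holo:
  fixes G :: "complex \<Rightarrow> complex^'n"
  assumes atlas: "complex_atlas A" and UA: "(U,\<phi>) \<in> A" and VA: "(V,\<theta>) \<in> A"
  and T: "open T" and GT: "\<And>t. t \<in> T \<Longrightarrow> G t \<in> \<phi> ` U"
  and Gh: "\<And>i. (\<lambda>t. G t $ i) holomorphic_on T"
  shows "(\<lambda>t. \<theta> (inv_into U \<phi> (G t)) $ i) holomorphic_on (T \<inter> (\<lambda>t. inv_into U \<phi> (G t)) -` V)"
proof (rule holomorphic_onI)
  fix t assume t: "t \<in> T \<inter> (\<lambda>t. inv_into U \<phi> (G t)) -` V"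
  have cf: "inv_into U \<phi> (G t) \<in> U \<and> \<phi> (inv_into U \<phi> (G t)) = G t"
    using chart_facts(7)[OF atlas UA] GT t by blast
  have q: "G t \<in> \<phi> ` (U \<inter> V)" using cf t by (metis IntD2 IntI image_eqI vimageE)
  have "holo_vec_on (\<phi> ` (U \<inter> V)) (\<theta> \<circ> inv_into U \<phi>)"
    using atlas UA VA unfolding complex_atlas_def by fast
  then obtain D where D: "((\<theta> \<circ> inv_into U \<phi>) has_derivative D) (at (G t))"
    "\<And>(c::complex) v. D (c *s v) = c *s D v"
    using q unfolding holo_vec_on_def by blast
  obtain v where v: "(G has_derivative (\<lambda>s. s *s v)) (at t)"
    using vec_holo_deriv[OF T _ Gh] t by blast
  have "((\<theta> \<circ> inv_into U \<phi>) \<circ> G has_derivative D \<circ> (\<lambda>s. s *s v)) (at t)"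
    by (rule diff_chain_at[OF v D(1)])
  from bounded_linear.has_derivative[OF bounded_linear_vec_nth this, of i]
  have "((\<lambda>t. ((\<theta> \<circ> inv_into U \<phi>) \<circ> G) t $ i) has_derivative (\<lambda>s. (D (s *s v)) $ i)) (at t)"
    by (simp add: o_def)
  also have "(\<lambda>s. (D (s *s v)) $ i) = (\<lambda>s. (D v $ i) * s)" using D(2) by (simp add: mult.commute)
  finally have "((\<lambda>t. \<theta> (inv_into U \<phi> (G t)) $ i) has_field_derivative (D v $ i)) (at t)"
    by (simp add: has_field_derivative_def o_def)
  then show "(\<lambda>t. \<theta> (inv_into U \<phi> (G t)) $ i) field_differentiable
      at t within T \<inter> (\<lambda>t. inv_into U \<phi> (G t)) -` V"
    using field_differentiable_at_within field_differentiable_def by blast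
qed

lemma holo_disc_chart:
  fixes G :: "complex \<Rightarrow> complex^'n"
  assumes atlas: "complex_atlas A" and UA: "(U,\<phi>) \<in> A"
  and GT: "\<And>t. t \<in> ball 0 1 \<Longrightarrow> G t \<in> \<phi> ` U"
  and Gh: "\<And>i. (\<lambda>t. G t $ i) holomorphic_on ball 0 1"
  shows "holo_disc A (\<lambda>t. inv_into U \<phi> (G t))"
proof -
  have "continuous_on (ball 0 1) G" by (rule vec_holo_cont[OF _ Gh]) simp
  then have c: "continuous_on (ball 0 1) (\<lambda>t. inv_into U \<phi> (G t))"
    by (rule continuous_on_compose2[OF chart_facts(5)[OF atlas UA]]) (use GT in auto)
  have h: "\<forall>(V,\<theta>)\<in>A. \<forall>i. (\<lambda>t. \<theta> (inv_into U \<phi> (G t)) $ i) holomorphic_on (ball 0 1 \<inter> (\<lambda>t. inv_into U \<phi> (G t)) -` V)"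
    using chart_compose_holo[OF atlas UA _ _ GT Gh] by auto
  show ?thesis unfolding holo_disc_def using c h by simp
qed



lemma norm_smult_cvec: "norm (c *s (v::complex^'n)) = cmod c * norm v"
  by (simp add: norm_vec_def L2_set_def norm_mult power_mult_distrib
      sum_distrib_left[symmetric] real_sqrt_mult)

lemma chart_ktilde_bound:
  fixes q1 q2 :: "complex^'n"
  assumes atlas: "complex_atlas A" and UA: "(U,\<phi>) \<in> A"
  and \<rho>: "0 < \<rho>" and cb: "cball q1 \<rho> \<subseteq> \<phi> ` U" and d: "dist q1 q2 \<le> \<rho>/2"
  shows "ktilde A (inv_into U \<phi> q1) (inv_into U \<phi> q2) \<le> ereal (2 * dist q1 q2 / \<rho>)"
proof (cases "q1 = q2")
  case True
  have q1: "q1 \<in> \<phi> ` U" using cb \<rho> by auto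
  have hd: "holo_disc A (\<lambda>t. inv_into U \<phi> ((\<lambda>_. q1) t))"
    by (rule holo_disc_chart[OF atlas UA]) (use q1 in auto)
  have "ktilde A (inv_into U \<phi> q1) (inv_into U \<phi> q2) \<le> ereal (artanh (cmod 0))"
    by (rule disc_step[OF hd]) (use True in auto)
  then show ?thesis using True by simp
next
  case False
  define a where "a = dist q1 q2 / \<rho>"
  have a0: "0 < a" "a \<le> 1/2" using False \<rho> d by (auto simp: a_def field_simps)
  define G where "G t = q1 + (t / of_real a) *s (q2 - q1)" for t
  have GT: "G t \<in> \<phi> ` U" if "t \<in> ball 0 1" for t
  proof -
    have "norm ((t / of_real a) *s (q2 - q1)) = cmod t / a * dist q1 q2"
      using a0 by (simp only: norm_smult_cvec norm_divide) (simp add: dist_norm norm_minus_commute)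
    also have "\<dots> = cmod t * \<rho>" using a0 \<rho> False by (simp add: a_def)
    also have "\<dots> \<le> \<rho>" using that \<rho> by simp
    finally have "G t \<in> cball q1 \<rho>" unfolding G_def mem_cball dist_norm by (simp add: norm_minus_commute)
    then show ?thesis using cb by blast
  qed
  have Gh: "(\<lambda>t. G t $ i) holomorphic_on ball 0 1" for i
    unfolding G_def by (simp add: holomorphic_intros)
  have hd: "holo_disc A (\<lambda>t. inv_into U \<phi> (G t))"
    by (rule holo_disc_chart[OF atlas UA GT Gh])
  have G0: "G 0 = q1" by (simp add: G_def)
  have Ga: "G (of_real a) = q2" using a0 by (simp add: G_def)
  have "ktilde A (inv_into U \<phi> q1) (inv_into U \<phi> q2) \<le> ereal (artanh (cmod (of_real a)))"
    by (rule disc_step[OF hd]) (use a0 G0 Ga in auto)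
  also have "artanh (cmod (of_real a)) \<le> 2 * a" using a0 by (simp add: artanh_le_2x)
  finally show ?thesis by (simp add: a_def)
qed

lemma transl_disc:
  fixes d :: "complex^'n"
  assumes atlas: "complex_atlas A" and UA: "(U,\<phi>) \<in> A" and hf: "holo_disc A f"
  and r: "0 < r" "r \<le> 1"
  and fU: "\<And>t. cmod t < r \<Longrightarrow> f t \<in> U"
  and fT: "\<And>t. cmod t < r \<Longrightarrow> \<phi> (f t) + d \<in> \<phi> ` U"
  shows "holo_disc A (\<lambda>t. inv_into U \<phi> (\<phi> (f (of_real r * t)) + d))"
proof (rule holo_disc_chart[OF atlas UA])
  fix t :: complex assume "t \<in> ball 0 1"
  then have "cmod (of_real r * t) < r" using r by (simp add: norm_mult)
  then show "\<phi> (f (of_real r * t)) + d \<in> \<phi> ` U" using fT by blast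
next
  fix i
  have h1: "(\<lambda>s. \<phi> (f s) $ i) holomorphic_on (ball 0 1 \<inter> f -` U)"
    using hf UA unfolding holo_disc_def by fast
  have h2: "(\<lambda>t. of_real r * t) holomorphic_on ball 0 1" by (simp add: holomorphic_intros)
  have sub: "(\<lambda>t. of_real r * t) ` ball 0 1 \<subseteq> ball 0 1 \<inter> f -` U"
  proof
    fix s :: complex assume "s \<in> (\<lambda>t. of_real r * t) ` ball 0 1"
    then obtain t where t: "cmod t < 1" "s = of_real r * t" by auto
    then have "cmod s < r" using r by (simp add: norm_mult)
    then show "s \<in> ball 0 1 \<inter> f -` U" using fU r by auto
  qed
  have "((\<lambda>s. \<phi> (f s) $ i) \<circ> (\<lambda>t. of_real r * t)) holomorphic_on ball 0 1"
    by (rule holomorphic_on_compose_gen[OF h2 h1 sub])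
  then have "(\<lambda>t. \<phi> (f (of_real r * t)) $ i + d $ i) holomorphic_on ball 0 1"
    by (simp add: o_def holomorphic_intros)
  then show "(\<lambda>t. (\<phi> (f (of_real r * t)) + d) $ i) holomorphic_on ball 0 1" by simp
qed

lemma exit_point:
  fixes f :: "complex \<Rightarrow> 'a::topological_space"
  assumes cont: "continuous_on (ball 0 1) f" and t: "t \<in> ball 0 1"
  and f0: "f 0 \<in> Bs" and ft: "f t \<notin> Bs" and oB: "open Bs" and cC: "closed Cs" and BC: "Bs \<subseteq> Cs"
  shows "\<exists>\<beta>\<in>closed_segment 0 t. f \<beta> \<in> Cs - Bs"
proof (rule ccontr)
  assume no: "\<not> ?thesis"
  have seg: "closed_segment 0 t \<subseteq> ball 0 1"
    using t convex_ball[of "0::complex" 1] by (simp add: convex_contains_segment)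
  have K: "connected (f ` closed_segment 0 t)"
    by (rule connected_continuous_image[OF continuous_on_subset[OF cont seg]]) simp
  have cov: "f ` closed_segment 0 t \<subseteq> Bs \<union> (- Cs)" using no by blast
  have dis: "Bs \<inter> (- Cs) \<inter> f ` closed_segment 0 t = {}" using BC by blast
  have "Bs \<inter> f ` closed_segment 0 t = {} \<or> (- Cs) \<inter> f ` closed_segment 0 t = {}"
    by (rule connectedD[OF K oB _ dis cov]) (use cC in auto)
  moreover have "f 0 \<in> Bs \<inter> f ` closed_segment 0 t" using f0 by auto
  moreover have "f t \<in> (- Cs) \<inter> f ` closed_segment 0 t" using no ft by auto
  ultimately show False by blast
qed



lemma ereal_pos_half: "0 < (x::ereal) \<Longrightarrow> \<exists>v>0. ereal (2 * v) \<le> x"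
proof (cases x)
  case (real r)
  assume "0 < x" then show ?thesis using real by (intro exI[of _ "r/2"]) auto
next
  case PInf then show ?thesis by (intro exI[of _ 1]) auto
next
  case MInf assume "0 < x" then show ?thesis using MInf by simp
qed

lemma chart_char:
  assumes atlas: "complex_atlas A" and UA: "(U,\<phi>) \<in> A" and S: "S \<subseteq> \<phi> ` U"
  shows "x \<in> inv_into U \<phi> ` S \<longleftrightarrow> x \<in> U \<and> \<phi> x \<in> S"
proof
  assume "x \<in> inv_into U \<phi> ` S"
  then obtain q where "q \<in> S" "x = inv_into U \<phi> q" by auto
  then show "x \<in> U \<and> \<phi> x \<in> S" using chart_facts(7)[OF atlas UA] S by auto
next
  assume "x \<in> U \<and> \<phi> x \<in> S"
  then show "x \<in> inv_into U \<phi> ` S" using chart_facts(6)[OF atlas UA] by (metis image_eqI)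
qed

lemma chart_open:
  assumes atlas: "complex_atlas A" and UA: "(U,\<phi>) \<in> A" and S: "S \<subseteq> \<phi> ` U" "open S"
  shows "open (inv_into U \<phi> ` S)"
proof -
  have "inv_into U \<phi> ` S = \<phi> -` S \<inter> U" using chart_char[OF atlas UA S(1)] by blast
  moreover have "open (\<phi> -` S \<inter> U)"
    using chart_facts(1,4)[OF atlas UA] S(2) continuous_on_open_vimage by blast
  ultimately show ?thesis by simp
qed



theorem mainTheorem6:
  fixes A :: "('a::{t2_space, second_countable_topology} set \<times> ('a \<Rightarrow> complex ^ 'n)) set"
    and z :: 'a
  assumes "complex_atlas A"
    and "hyperbolic_at A z"
  shows "\<exists>W. open W \<and> z \<in> W \<and> (\<forall>z'\<in>W. hyperbolic_at A z')"
proof -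
  note atlas = assms(1)
  have hyp: "\<And>w. w \<noteq> z \<Longrightarrow> 0 < kobayashi A z w" using assms(2) by (simp add: hyperbolic_at_def)
  have "z \<in> \<Union> (fst ` A)" using atlas by (simp add: complex_atlas_def)
  then obtain U \<phi> where UA: "(U,\<phi>) \<in> A" and zU: "z \<in> U" by auto
  note cf = chart_facts[OF atlas UA]
  define inv where "inv = inv_into U \<phi>"
  define p where "p = \<phi> z"
  have pU: "p \<in> \<phi> ` U" using zU by (simp add: p_def)
  obtain e where e: "e > 0" "cball p e \<subseteq> \<phi> ` U" using cf(2) pU open_contains_cball by blast
  define R where "R = e / 4"
  have R0: "R > 0" using e by (simp add: R_def)
  have c4: "cball p (4*R) \<subseteq> \<phi> ` U" using e by (simp add: R_def)
  have invp: "inv p = z" using cf(6)[OF zU] by (simp add: inv_def p_def)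
  have cf7: "\<And>q. q \<in> \<phi> ` U \<Longrightarrow> inv q \<in> U \<and> \<phi> (inv q) = q" using cf(7) by (simp add: inv_def)
  have bsub: "\<And>r. r \<le> 4*R \<Longrightarrow> ball p r \<subseteq> \<phi> ` U" using c4 by (meson ball_subset_cball cball_subset_cball_iff order.trans order_refl)
  have cbsub: "\<And>r. r \<le> 4*R \<Longrightarrow> cball p r \<subseteq> \<phi> ` U" using c4 by (meson cball_subset_cball_iff order.trans order_refl)
  define B where "B = inv ` ball p (2*R)"
  define C where "C = inv ` cball p (2*R)"
  have Bchar: "\<And>x. x \<in> B \<longleftrightarrow> x \<in> U \<and> \<phi> x \<in> ball p (2*R)"
    unfolding B_def inv_def by (rule chart_char[OF atlas UA bsub]) (use R0 in simp)
  have Cchar: "\<And>x. x \<in> C \<longleftrightarrow> x \<in> U \<and> \<phi> x \<in> cball p (2*R)"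
    unfolding C_def inv_def by (rule chart_char[OF atlas UA cbsub]) (use R0 in simp)
  have oB: "open B" unfolding B_def inv_def by (rule chart_open[OF atlas UA bsub]) (use R0 in auto)
  have cC: "closed C"
  proof -
    have "compact C" unfolding C_def inv_def
      by (rule compact_continuous_image[OF continuous_on_subset[OF cf(5) cbsub]]) (use R0 in auto)
    then show ?thesis by (rule compact_imp_closed)
  qed
  have BC: "B \<subseteq> C" using Bchar Cchar by auto
  have CB: "\<And>x. x \<in> C - B \<Longrightarrow> \<exists>q\<in>sphere p (2*R). x = inv q"
  proof -
    fix x assume "x \<in> C - B"
    then have "x \<in> U" "\<phi> x \<in> sphere p (2*R)" using Bchar Cchar by auto
    then show "\<exists>q\<in>sphere p (2*R). x = inv q" using cf(6) by (intro bexI[of _ "\<phi> x"]) (auto simp: inv_def)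
  qed
  \<comment> \<open>compactness: uniform lower bound on the sphere\<close>
  have "\<forall>q\<in>sphere p (2*R). \<exists>v>0. ereal (2 * v) \<le> kobayashi A z (inv q)"
  proof
    fix q assume q: "q \<in> sphere p (2*R)"
    have "q \<in> \<phi> ` U" using q cbsub[of "2*R"] R0 by auto
    then have "\<phi> (inv q) = q" using cf7 by blast
    moreover have "q \<noteq> p" using q R0 by auto
    ultimately have "inv q \<noteq> z" by (auto simp: p_def)
    then show "\<exists>v>0. ereal (2 * v) \<le> kobayashi A z (inv q)" using hyp ereal_pos_half by blast
  qed
  then obtain v where v: "\<And>q. q \<in> sphere p (2*R) \<Longrightarrow> v q > 0 \<and> ereal (2 * v q) \<le> kobayashi A z (inv q)"
    by metis
  define \<eta> where "\<eta> q = min (R/2) (R * v q / 2)" for q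
  have near: "ereal (v q) \<le> kobayashi A z (inv q')"
    if q: "q \<in> sphere p (2*R)" and q': "dist q q' < \<eta> q" for q q'
  proof (rule ccontr)
    assume "\<not> ?thesis"
    then have lt: "kobayashi A z (inv q') < ereal (v q)" by simp
    have vq: "v q > 0" using v q by blast
    have d1: "dist q' q \<le> R/2" using q' by (simp add: \<eta>_def dist_commute)
    have d2: "dist q' q < R * v q / 2" using q' by (simp add: \<eta>_def dist_commute)
    have "cball q' R \<subseteq> cball p (4*R)"
    proof
      fix y assume "y \<in> cball q' R"
      then have "dist q' y \<le> R" by simp
      moreover have "dist p q = 2*R" using q by simp
      ultimately have "dist p y \<le> 2*R + R/2 + R" using d1 dist_triangle[of p y q] dist_triangle[of q y q']
        by (simp add: dist_commute)
      then show "y \<in> cball p (4*R)" using R0 by simp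
    qed
    then have cbq': "cball q' R \<subseteq> \<phi> ` U" using c4 by blast
    have kt: "ktilde A (inv q') (inv q) \<le> ereal (2 * dist q' q / R)"
      unfolding inv_def by (rule chart_ktilde_bound[OF atlas UA R0 cbq' d1])
    have "kobayashi A z (inv q) < ereal (v q + 2 * dist q' q / R)" by (rule kob_step[OF lt kt])
    also have "v q + 2 * dist q' q / R < 2 * v q" using d2 R0 by (simp add: field_simps)
    finally show False using v q by (simp add: less_le_not_le)
  qed
  have csph: "compact (sphere p (2*R))" by simp
  obtain Q where Q: "Q \<subseteq> sphere p (2*R)" "finite Q" "sphere p (2*R) \<subseteq> (\<Union>q\<in>Q. ball q (\<eta> q))"
    by (rule compactE_image[OF csph, of "sphere p (2*R)" "\<lambda>q. ball q (\<eta> q)"])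
       (auto intro!: exI[of _ 1] simp: \<eta>_def v R0)
  define \<delta>3 where "\<delta>3 = Min (insert 1 (v ` Q))"
  have \<delta>30: "\<delta>3 > 0" unfolding \<delta>3_def using Q v by (subst Min_gr_iff) auto
  have sph_bound: "ereal \<delta>3 \<le> kobayashi A z (inv q')" if q': "q' \<in> sphere p (2*R)" for q'
  proof -
    obtain q where q: "q \<in> Q" "q' \<in> ball q (\<eta> q)" using Q q' by blast
    have "\<delta>3 \<le> v q" unfolding \<delta>3_def using q Q by (intro Min_le) auto
    moreover have "ereal (v q) \<le> kobayashi A z (inv q')" using near q Q by auto
    ultimately show ?thesis by (meson ereal_less_eq(3) order.trans)
  qed
  have C_bound: "\<And>x. x \<in> C - B \<Longrightarrow> ereal \<delta>3 \<le> kobayashi A z x" using CB sph_bound by blast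
  define \<rho>0 where "\<rho>0 = min (1/2) (\<delta>3/4)"
  have \<rho>00: "\<rho>0 > 0" "\<rho>0 \<le> 1/2" "\<rho>0 \<le> \<delta>3/4" using \<delta>30 by (auto simp: \<rho>0_def)
  have Loc: "f t \<in> B" if xB: "x \<in> B" and kx: "kobayashi A z x < ereal (\<delta>3/2)"
    and hf: "holo_disc A f" and f0: "f 0 = x" and t: "cmod t < \<rho>0" for x f t
  proof (rule ccontr)
    assume nt: "f t \<notin> B"
    have tb: "t \<in> ball 0 1" using t \<rho>00 by simp
    have fc: "continuous_on (ball 0 1) f" using hf by (simp add: holo_disc_def)
    obtain \<beta> where \<beta>: "\<beta> \<in> closed_segment 0 t" "f \<beta> \<in> C - B"
      using exit_point[OF fc tb _ nt oB cC BC] xB f0 by blast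
    have nb: "cmod \<beta> \<le> cmod t" using segment_bound1[OF \<beta>(1)] by simp
    have bb: "\<beta> \<in> ball 0 1" using nb t \<rho>00 by simp
    have "ktilde A x (f \<beta>) \<le> ereal (artanh (cmod \<beta>))" by (rule disc_step[OF hf bb f0 refl])
    also have "artanh (cmod \<beta>) \<le> 2 * cmod \<beta>" using nb t \<rho>00 by (intro artanh_le_2x) auto
    finally have kt: "ktilde A x (f \<beta>) \<le> ereal (2 * cmod \<beta>)" by simp
    have "kobayashi A z (f \<beta>) < ereal (\<delta>3/2 + 2 * cmod \<beta>)" by (rule kob_step[OF kx kt])
    also have "\<delta>3/2 + 2 * cmod \<beta> \<le> \<delta>3" using nb t \<rho>00 by simp
    finally show False using C_bound[OF \<beta>(2)] by simp
  qed
  define r1 where "r1 = R * min 1 (\<delta>3/8)"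
  have r10: "r1 > 0" "r1 \<le> R" "r1 \<le> R * (\<delta>3/8)" using R0 \<delta>30 by (auto simp: r1_def)
  define W where "W = inv ` ball p r1"
  have Wchar: "\<And>x. x \<in> W \<longleftrightarrow> x \<in> U \<and> \<phi> x \<in> ball p r1"
    unfolding W_def inv_def by (rule chart_char[OF atlas UA bsub]) (use r10 in simp)
  have oW: "open W" unfolding W_def inv_def by (rule chart_open[OF atlas UA bsub]) (use r10 in auto)
  have zW: "z \<in> W" using Wchar zU r10 by (simp add: p_def)
  have "\<forall>z'\<in>W. hyperbolic_at A z'"
  proof
    fix z' assume z'W: "z' \<in> W"
    have z'U: "z' \<in> U" and z'b: "\<phi> z' \<in> ball p r1" using Wchar z'W by auto
    have z'B: "z' \<in> B" using Bchar z'U z'b r10 R0 by auto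
    have kzz': "kobayashi A z z' < ereal (\<delta>3/4)"
    proof -
      have d: "dist p (\<phi> z') \<le> 2*R/2" using z'b r10 by simp
      have "ktilde A (inv p) (inv (\<phi> z')) \<le> ereal (2 * dist p (\<phi> z') / (2*R))"
        unfolding inv_def by (rule chart_ktilde_bound[OF atlas UA _ cbsub d]) (use R0 in auto)
      then have "kobayashi A z z' \<le> ereal (2 * dist p (\<phi> z') / (2*R))"
        using kob_le_ktilde[of A z z'] invp cf(6)[OF z'U] by (simp add: inv_def)
      also have "2 * dist p (\<phi> z') / (2*R) < \<delta>3/4"
      proof -
        have "dist p (\<phi> z') < r1" using z'b by simp
        then have "dist p (\<phi> z') < R * (\<delta>3/8)" using r10 by simp
        then show ?thesis using R0 zero_le_dist[of p "\<phi> z'"] by (simp add: field_simps) (smt (verit) zero_le_dist)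
      qed
      finally show ?thesis by simp
    qed
    define d where "d = p - \<phi> z'"
    have nd: "norm d < R" using z'b r10 by (simp add: d_def dist_norm)
    have shift: "\<phi> x + d \<in> \<phi> ` U" "\<phi> x + d \<in> ball p (3*R)" if "x \<in> B" for x
    proof -
      have "\<phi> x \<in> ball p (2*R)" using Bchar that by auto
      then have "dist p (\<phi> x + d) < 3*R" using nd dist_triangle[of p "\<phi> x + d" "\<phi> x"]
        by (simp add: dist_norm)
      then show "\<phi> x + d \<in> ball p (3*R)" by simp
      then show "\<phi> x + d \<in> \<phi> ` U" using bsub[of "3*R"] R0 by auto
    qed
    show "hyperbolic_at A z'" unfolding hyperbolic_at_def
    proof (intro allI impI)
      fix w assume wz': "w \<noteq> z'"
      define y where "y = inv (\<phi> w + d)"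
      obtain K where K: "K > 0" "w \<in> B \<Longrightarrow> ereal K \<le> kobayashi A z y"
      proof (cases "w \<in> B")
        case True
        have "y \<noteq> z"
        proof
          assume "y = z"
          then have "\<phi> (inv (\<phi> w + d)) = \<phi> z" by (simp add: y_def)
          then have "\<phi> w + d = p" using cf7 shift(1)[OF True] by (simp add: p_def)
          then have "\<phi> w = \<phi> z'" by (simp add: d_def)
          then show False using cf(3) z'U True Bchar wz' by (meson inj_on_def)
        qed
        then obtain v' where "v' > 0" "ereal (2 * v') \<le> kobayashi A z y" using hyp ereal_pos_half by blast
        then show ?thesis using that[of "2 * v'"] by simp
      next
        case False then show ?thesis using that[of 1] by simp
      qed
      define c where "c = min (\<delta>3/4) (min (\<rho>0/4) (\<rho>0 * K/4))"
      have c0: "c > 0" using \<delta>30 \<rho>00 K by (simp add: c_def)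
      have "ereal c \<le> kobayashi A z' w"
      proof (rule kob_lower[OF c0])
        fix m :: nat and xs f \<alpha>
        assume xs0: "xs 0 = z'" and xsm: "xs m = w"
          and ch: "\<forall>j\<in>{1..m}. \<alpha> j \<in> ball 0 1 \<and> holo_disc A (f j) \<and> f j 0 = xs (j - 1) \<and> f j (\<alpha> j) = xs j"
          and sm: "(\<Sum>j\<in>{1..m}. artanh (cmod (\<alpha> j))) < c"
        define P where "P j = (\<Sum>i\<in>{1..j}. artanh (cmod (\<alpha> i)))" for j
        have at0: "0 \<le> artanh (cmod (\<alpha> j))" if "j \<in> {1..m}" for j
          using ch that by (intro artanh_nonneg_real) auto
        have Ple: "P j \<le> P m" if "j \<le> m" for j
          unfolding P_def by (rule sum_mono2) (use that at0 in auto)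
        have one: "artanh (cmod (\<alpha> j)) \<le> P m" if "j \<in> {1..m}" for j
          unfolding P_def by (rule member_le_sum) (use that at0 in auto)
        have Pm: "P m < c" using sm by (simp add: P_def)
        have asmall: "cmod (\<alpha> j) < 2 * c" if "j \<in> {1..m}" for j
        proof -
          have "cmod (\<alpha> j) / 2 \<le> artanh (cmod (\<alpha> j))" using ch that by (intro artanh_ge_half) auto
          then show ?thesis using one[OF that] Pm by simp
        qed
        have inv_j: "xs j \<in> B \<and> kobayashi A z (xs j) < ereal (\<delta>3/4 + P j)" if "j \<le> m" for j
          using that
        proof (induction j)
          case 0 then show ?case using z'B kzz' xs0 by (simp add: P_def)
        next
          case (Suc j)
          then have IH: "xs j \<in> B" "kobayashi A z (xs j) < ereal (\<delta>3/4 + P j)" by auto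
          have jm: "Suc j \<in> {1..m}" using Suc by simp
          have chj: "\<alpha> (Suc j) \<in> ball 0 1" "holo_disc A (f (Suc j))" "f (Suc j) 0 = xs j"
            "f (Suc j) (\<alpha> (Suc j)) = xs (Suc j)" using ch jm by auto
          have "P j \<le> P m" using Suc by (intro Ple) simp
          then have "\<delta>3/4 + P j \<le> \<delta>3/2" using Pm unfolding c_def by linarith
          then have "kobayashi A z (xs j) < ereal (\<delta>3/2)"
            using IH(2) by (meson ereal_less_eq(3) less_le_trans)
          moreover have "cmod (\<alpha> (Suc j)) < \<rho>0" using asmall[OF jm] \<rho>00 unfolding c_def by linarith
          ultimately have "xs (Suc j) \<in> B" using Loc[OF IH(1) _ chj(2,3)] chj(4) by metis
          moreover have "kobayashi A z (xs (Suc j)) < ereal (\<delta>3/4 + P j + artanh (cmod (\<alpha> (Suc j))))"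
            by (rule kob_step[OF IH(2) disc_step[OF chj(2,1,3,4)]])
          moreover have "P (Suc j) = P j + artanh (cmod (\<alpha> (Suc j)))" by (simp add: P_def)
          ultimately show ?case by (simp add: add.assoc)
        qed
        have m1: "m \<ge> 1" using xs0 xsm wz' by (cases m) auto
        have wB: "w \<in> B" using inv_j[of m] xsm by simp
        have fB: "f j t \<in> B" if j: "j \<in> {1..m}" and t: "cmod t < \<rho>0" for j t
        proof -
          have "xs (j - 1) \<in> B" "kobayashi A z (xs (j - 1)) < ereal (\<delta>3/4 + P (j - 1))"
            using inv_j[of "j - 1"] j by auto
          moreover have "P (j - 1) \<le> P m" using j by (intro Ple) auto
          moreover have "\<delta>3/4 + P (j - 1) \<le> \<delta>3/2" using Pm \<open>P (j - 1) \<le> P m\<close> unfolding c_def by linarith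
          ultimately have "xs (j - 1) \<in> B" "kobayashi A z (xs (j - 1)) < ereal (\<delta>3/2)"
            by (auto intro: less_le_trans)
          then show ?thesis using Loc[of "xs (j - 1)" "f j" t] ch j t by auto
        qed
        define g where "g j t = inv (\<phi> (f j (of_real \<rho>0 * t)) + d)" for j t
        define \<alpha>' where "\<alpha>' j = \<alpha> j / of_real \<rho>0" for j
        define ys where "ys j = inv (\<phi> (xs j) + d)" for j
        have chain': "\<alpha>' j \<in> ball 0 1 \<and> holo_disc A (g j) \<and> g j 0 = ys (j - 1) \<and> g j (\<alpha>' j) = ys j"
          if j: "j \<in> {1..m}" for j
        proof (intro conjI)
          have "cmod (\<alpha>' j) = cmod (\<alpha> j) / \<rho>0" using \<rho>00 by (simp add: \<alpha>'_def norm_divide)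
          also have "\<dots> < 1" using asmall[OF j] \<rho>00 unfolding c_def by (simp add: field_simps)
          finally show "\<alpha>' j \<in> ball 0 1" by simp
          show "holo_disc A (g j)" unfolding g_def inv_def
            by (rule transl_disc[OF atlas UA _ \<rho>00(1)]) (use ch j fB Bchar shift \<rho>00 in auto)
          show "g j 0 = ys (j - 1)" using ch j by (simp add: g_def ys_def)
          show "g j (\<alpha>' j) = ys j" using ch j \<rho>00 by (simp add: g_def ys_def \<alpha>'_def)
        qed
        have "kobayashi A (ys 0) (ys m) \<le> ereal (\<Sum>j\<in>{1..m}. artanh (cmod (\<alpha>' j)))"
          by (rule kob_le_disc_chain[where f=g]) (use chain' in blast)
        moreover have "ys 0 = z" using xs0 invp by (simp add: ys_def d_def)
        moreover have "ys m = y" using xsm by (simp add: ys_def y_def)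
        moreover have "(\<Sum>j\<in>{1..m}. artanh (cmod (\<alpha>' j))) \<le> (\<Sum>j\<in>{1..m}. (4/\<rho>0) * artanh (cmod (\<alpha> j)))"
        proof (rule sum_mono)
          fix j assume j: "j \<in> {1..m}"
          have na: "cmod (\<alpha>' j) = cmod (\<alpha> j) / \<rho>0" using \<rho>00 by (simp add: \<alpha>'_def norm_divide)
          have "cmod (\<alpha> j) / \<rho>0 \<le> 1/2" using asmall[OF j] \<rho>00 unfolding c_def by (simp add: field_simps)
          then have "artanh (cmod (\<alpha>' j)) \<le> 2 * (cmod (\<alpha> j) / \<rho>0)" unfolding na
            by (intro artanh_le_2x) (use \<rho>00 in auto)
          also have "\<dots> \<le> (4/\<rho>0) * artanh (cmod (\<alpha> j))"
          proof -
            have "cmod (\<alpha> j) / 2 \<le> artanh (cmod (\<alpha> j))" using ch j by (intro artanh_ge_half) auto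
            then show ?thesis using \<rho>00 by (simp add: field_simps)
          qed
          finally show "artanh (cmod (\<alpha>' j)) \<le> (4/\<rho>0) * artanh (cmod (\<alpha> j))" .
        qed
        moreover have "(\<Sum>j\<in>{1..m}. (4/\<rho>0) * artanh (cmod (\<alpha> j))) = (4/\<rho>0) * P m"
          by (simp add: P_def sum_distrib_left)
        moreover have "(4/\<rho>0) * P m < K"
        proof -
          have "(4/\<rho>0) * P m < (4/\<rho>0) * c" using Pm \<rho>00 by (simp add: divide_strict_right_mono)
          also have "\<dots> \<le> (4/\<rho>0) * (\<rho>0 * K/4)" using \<rho>00 by (intro mult_left_mono) (auto simp: c_def)
          also have "\<dots> = K" using \<rho>00 by simp
          finally show ?thesis .
        qed
        ultimately have "kobayashi A z y < ereal K" by (smt (verit) ereal_less_eq(3) order_le_less_trans less_ereal.simps(1))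
        then show False using K(2)[OF wB] by simp
      qed
      then show "0 < kobayashi A z' w" using c0 by (meson ereal_less(2) less_le_trans)
    qed
  qed
  then show ?thesis using oW zW by blast
qed

end
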